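(* Let $\epsilon>0$, and let $\gamma=O(1/\epsilon)$ be chosen sufficiently large (so that, for all $p,q\in M$, the path that climbs the net tree from $p$ to $p^{(i)}$, takes the cross edge to $q^{(i)}$ and descends to $q$, where $i$ is the smallest level at which $p^{(i)},q^{(i)}$ are joined by a cross edge, has length at most $(1+\epsilon)d(p,q)$). Then the routing algorithm described below has routing ratio $1+\epsilon$ and diameter $O(\log n)$: for all $p,q\in M$, routing from $p$ to $q$ reaches $q$ after traversing $O(\log n)$ edges of the spanner, and the total length of the traversed path is at most $(1+\epsilon)d(p,q)$.
   Context: $(M,d)$ is an $n$-point metric of constant doubling dimension, minimum interpoint distance $1$, diameter $D$; $\log$ is base $2$. Nested sets $M=N_0\supseteq N_1\supseteq\cdots\supseteq N_{\log D}$ are computed, $N_i$ a $2^i$-net of $N_{i-1}$ (distinct points of $N_i$ at distance $>2^i$; every point of $N_{i-1}$ within $2^i$ of $N_i$), the top set a singleton. Net tree: one level-$i$ node per point of $N_i$, with representative $rep(\cdot)$ that point; the parent of a level-$i$ node $v$ is a level-$(i+1)$ node $w$ with $d(rep(v),rep(w))\le 2^{i+1}$; leaves correspond to points of $M$; $p^{(i)}$ is the level-$i$ ancestor of leaf $p$; tree edge $(u,w)$ has weight $d(rep(u),rep(w))$. Fix $\gamma>4$; a cross edge joins level-$i$ nodes $u,w$ whenever $d(rep(u),rep(w))\le\gamma 2^i$. Light subtrees are the subtrees of the net tree of height $\log(D/n)$ (rooted at nodes of level $\log(D/n)$ and containing all their descendants). On each light subtree, viewed as a weighted rooted tree, the Solomon–Elkin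 tree-metric 1-spanner with a constant parameter $k\ge4$ is built: recursively, a set of at most $k+1$ cut vertices $C_R$ of a subtree $R$ is chosen, all pairs in $C_R$ are joined by shortcut edges (weighted by tree distance), and the construction recurses on the components of $R$ minus $C_R$. Within a light subtree, the "1-spanner routing algorithm" is a local routing algorithm on this 1-spanner which always moves along shortcut or tree edges, visits vertices of the tree path to its target in order (so its path length equals the tree distance), and reaches its target within $O(\log n)$ hops. The spanner $H$ on $M$ is induced by all these edges via representatives. A $(1+\delta)$-approximate distance labelling gives $\tilde d(p,q)$ with $d(p,q)\le\tilde d(p,q)\le(1+\delta)d(p,q)$ for a constant $\delta>0$. Routing from $p$ to $q$ (current net-tree node $u$, destination leaf $v=q$): Initialization: set target level $i=\lfloor\log(\tilde d(p,q)/((1+\delta)(\gamma+4)))\rfloor$, start at the leaf $p$. Ascending (while $u$ is below level $i$): if $u$ is in a light subtree, use the 1-spanner routing algorithm in that light subtree to move towards the level-$i$ ancestor of $u$; otherwise move to the parent of $u$. Searching (at level $\ge i$): if $u$ has a cross edge to an ancestor of $v$, move to that ancestor; otherwise move to the parent of $u$. Descending (once $u$ is an ancestor of $v$): if $u$ is in a light subtree, use the 1-spanner routing algorithm to move towards $v$; otherwise move to the child of $u$ that is an ancestor of $v$. The routed path length is the sum of $d(rep(\cdot),rep(\cdot))$ over traversed edges. *)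

theory Defs
  imports Complex_Main
begin

type_synonym 'a node = "nat \<times> 'a"   \<comment> \<open>(level, representative)\<close>

definition metric_on :: "'a set \<Rightarrow> ('a \<Rightarrow> 'a \<Rightarrow> real) \<Rightarrow> bool" where
  "metric_on M d \<longleftrightarrow>
     (\<forall>x\<in>M. \<forall>y\<in>M. d x y = d y x \<and> 0 \<le> d x y \<and> (d x y = 0 \<longleftrightarrow> x = y)) \<and>
     (\<forall>x\<in>M. \<forall>y\<in>M. \<forall>z\<in>M. d x z \<le> d x y + d y z)"

definition min_dist_one :: "'a set \<Rightarrow> ('a \<Rightarrow> 'a \<Rightarrow> real) \<Rightarrow> bool" where
  "min_dist_one M d \<longleftrightarrow> (\<forall>x\<in>M. \<forall>y\<in>M. x \<noteq> y \<longrightarrow> 1 \<le> d x y)"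

definition doubling :: "'a set \<Rightarrow> ('a \<Rightarrow> 'a \<Rightarrow> real) \<Rightarrow> nat \<Rightarrow> bool" where
  "doubling M d dd \<longleftrightarrow>
     (\<forall>x\<in>M. \<forall>r>0. \<exists>F. F \<subseteq> M \<and> finite F \<and> card F \<le> 2 ^ dd \<and>
        {y\<in>M. d x y \<le> 2 * r} \<subseteq> (\<Union>c\<in>F. {y\<in>M. d c y \<le> r}))"

definition diam :: "'a set \<Rightarrow> ('a \<Rightarrow> 'a \<Rightarrow> real) \<Rightarrow> real" where
  "diam M d = Max {d x y | x y. x \<in> M \<and> y \<in> M}"

definition is_net_seq :: "'a set \<Rightarrow> ('a \<Rightarrow> 'a \<Rightarrow> real) \<Rightarrow> (nat \<Rightarrow> 'a set) \<Rightarrow> nat \<Rightarrow> bool" where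
  "is_net_seq M d N L \<longleftrightarrow> N 0 = M \<and>
     (\<forall>i<L. N (Suc i) \<subseteq> N i \<and>
        (\<forall>x\<in>N (Suc i). \<forall>y\<in>N (Suc i). x \<noteq> y \<longrightarrow> d x y > 2 ^ Suc i) \<and>
        (\<forall>x\<in>N i. \<exists>y\<in>N (Suc i). d x y \<le> 2 ^ Suc i)) \<and>
     (\<exists>r. N L = {r})"

definition is_parent_fun :: "(nat \<Rightarrow> 'a set) \<Rightarrow> nat \<Rightarrow> ('a \<Rightarrow> 'a \<Rightarrow> real) \<Rightarrow> (nat \<Rightarrow> 'a \<Rightarrow> 'a) \<Rightarrow> bool" where
  "is_parent_fun N L d par \<longleftrightarrow>
     (\<forall>i<L. \<forall>x\<in>N i. par i x \<in> N (Suc i) \<and> d x (par i x) \<le> 2 ^ Suc i)"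

text \<open>Representative of the ancestor k levels above the level-l node with representative x.\<close>
fun up :: "(nat \<Rightarrow> 'a \<Rightarrow> 'a) \<Rightarrow> nat \<Rightarrow> 'a \<Rightarrow> nat \<Rightarrow> 'a" where
  "up par l x 0 = x"
| "up par l x (Suc k) = par (l + k) (up par l x k)"

definition nodes :: "(nat \<Rightarrow> 'a set) \<Rightarrow> nat \<Rightarrow> 'a node set" where
  "nodes N L = {(l, x). l \<le> L \<and> x \<in> N l}"

definition anc_set :: "(nat \<Rightarrow> 'a \<Rightarrow> 'a) \<Rightarrow> nat \<Rightarrow> 'a node \<Rightarrow> 'a node set" where
  "anc_set par L u = {(fst u + k, up par (fst u) (snd u) k) | k. fst u + k \<le> L}"

definition tree_path :: "(nat \<Rightarrow> 'a \<Rightarrow> 'a) \<Rightarrow> nat \<Rightarrow> 'a node \<Rightarrow> 'a node \<Rightarrow> 'a node set" where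
  "tree_path par L u t =
     (anc_set par L u - anc_set par L t) \<union> (anc_set par L t - anc_set par L u) \<union>
     {w \<in> anc_set par L u \<inter> anc_set par L t.
        \<forall>w'\<in>anc_set par L u \<inter> anc_set par L t. fst w \<le> fst w'}"

definition parent_node :: "(nat \<Rightarrow> 'a \<Rightarrow> 'a) \<Rightarrow> 'a node \<Rightarrow> 'a node" where
  "parent_node par u = (Suc (fst u), par (fst u) (snd u))"

definition tree_edge :: "(nat \<Rightarrow> 'a \<Rightarrow> 'a) \<Rightarrow> 'a node \<Rightarrow> 'a node \<Rightarrow> bool" where
  "tree_edge par u w \<longleftrightarrow> w = parent_node par u \<or> u = parent_node par w"

definition cross_edge :: "('a \<Rightarrow> 'a \<Rightarrow> real) \<Rightarrow> real \<Rightarrow> 'a node \<Rightarrow> 'a node \<Rightarrow> bool" where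
  "cross_edge d \<gamma> u w \<longleftrightarrow> fst u = fst w \<and> u \<noteq> w \<and> d (snd u) (snd w) \<le> \<gamma> * 2 ^ fst u"

text \<open>Root level of the light subtrees: log (D/n).\<close>
definition light_level :: "'a set \<Rightarrow> ('a \<Rightarrow> 'a \<Rightarrow> real) \<Rightarrow> nat" where
  "light_level M d = nat \<lfloor>log 2 (diam M d / real (card M))\<rfloor>"

definition same_light :: "(nat \<Rightarrow> 'a \<Rightarrow> 'a) \<Rightarrow> nat \<Rightarrow> 'a node \<Rightarrow> 'a node \<Rightarrow> bool" where
  "same_light par h u t \<longleftrightarrow> fst u \<le> h \<and> fst t \<le> h \<and>
     up par (fst u) (snd u) (h - fst u) = up par (fst t) (snd t) (h - fst t)"

definition shortcut_set :: "(nat \<Rightarrow> 'a set) \<Rightarrow> nat \<Rightarrow> (nat \<Rightarrow> 'a \<Rightarrow> 'a) \<Rightarrow> nat \<Rightarrow> ('a node \<times> 'a node) set \<Rightarrow> bool" where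
  "shortcut_set N L par h S \<longleftrightarrow>
     (\<forall>(u, w)\<in>S. u \<in> nodes N L \<and> w \<in> nodes N L \<and> same_light par h u w)"

text \<open>The 1-spanner routing algorithm inside light subtrees: sr u t is the next hop from u
  towards t; it moves along tree or shortcut edges, visits the vertices of the tree path
  to t in order, and reaches t within c * log n hops.\<close>
definition spanner_router ::
  "('a node \<Rightarrow> 'a node \<Rightarrow> 'a node) \<Rightarrow> ('a node \<times> 'a node) set \<Rightarrow> (nat \<Rightarrow> 'a set) \<Rightarrow> nat \<Rightarrow>
   (nat \<Rightarrow> 'a \<Rightarrow> 'a) \<Rightarrow> nat \<Rightarrow> real \<Rightarrow> nat \<Rightarrow> bool" where
  "spanner_router sr S N L par h c n \<longleftrightarrow>
     (\<forall>u\<in>nodes N L. \<forall>t\<in>nodes N L. same_light par h u t \<and> u \<noteq> t \<longrightarrow>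
        sr u t \<in> tree_path par L u t \<and> sr u t \<noteq> u \<and>
        tree_path par L (sr u t) t \<subseteq> tree_path par L u t \<and>
        (tree_edge par u (sr u t) \<or> (u, sr u t) \<in> S \<or> (sr u t, u) \<in> S)) \<and>
     (\<forall>u\<in>nodes N L. \<forall>t\<in>nodes N L. same_light par h u t \<longrightarrow>
        (\<exists>k. real k \<le> c * log 2 (real n) \<and> ((\<lambda>w. sr w t) ^^ k) u = t))"

definition approx_labelling :: "'a set \<Rightarrow> ('a \<Rightarrow> 'a \<Rightarrow> real) \<Rightarrow> real \<Rightarrow> ('a \<Rightarrow> 'a \<Rightarrow> real) \<Rightarrow> bool" where
  "approx_labelling M d \<delta> dt \<longleftrightarrow>
     (\<forall>p\<in>M. \<forall>q\<in>M. d p q \<le> dt p q \<and> dt p q \<le> (1 + \<delta>) * d p q)"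

definition gamma_ok :: "'a set \<Rightarrow> ('a \<Rightarrow> 'a \<Rightarrow> real) \<Rightarrow> (nat \<Rightarrow> 'a \<Rightarrow> 'a) \<Rightarrow> real \<Rightarrow> real \<Rightarrow> bool" where
  "gamma_ok M d par \<gamma> \<epsilon> \<longleftrightarrow>
     (\<forall>p\<in>M. \<forall>q\<in>M.
        (let i0 = (LEAST i. d (up par 0 p i) (up par 0 q i) \<le> \<gamma> * 2 ^ i) in
          (\<Sum>j<i0. d (up par 0 p j) (up par 0 p (Suc j))) + d (up par 0 p i0) (up par 0 q i0)
          + (\<Sum>j<i0. d (up par 0 q j) (up par 0 q (Suc j))) \<le> (1 + \<epsilon>) * d p q))"

datatype phase = Asc | Srch | Desc

definition target_level :: "('a \<Rightarrow> 'a \<Rightarrow> real) \<Rightarrow> real \<Rightarrow> real \<Rightarrow> 'a \<Rightarrow> 'a \<Rightarrow> int" where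
  "target_level dt \<delta> \<gamma> p q = \<lfloor>log 2 (dt p q / ((1 + \<delta>) * (\<gamma> + 4)))\<rfloor>"

definition ascend_step :: "(nat \<Rightarrow> 'a \<Rightarrow> 'a) \<Rightarrow> ('a node \<Rightarrow> 'a node \<Rightarrow> 'a node) \<Rightarrow> nat \<Rightarrow> int \<Rightarrow> 'a node \<Rightarrow> 'a node" where
  "ascend_step par sr h i u =
     (if fst u < h then
        (let m = min (nat i) h in sr u (m, up par (fst u) (snd u) (m - fst u)))
      else parent_node par u)"

definition search_step :: "('a \<Rightarrow> 'a \<Rightarrow> real) \<Rightarrow> (nat \<Rightarrow> 'a \<Rightarrow> 'a) \<Rightarrow> real \<Rightarrow> 'a \<Rightarrow> 'a node \<Rightarrow> 'a node" where
  "search_step d par \<gamma> q u =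
     (let a = (fst u, up par 0 q (fst u)) in
        if cross_edge d \<gamma> u a then a else parent_node par u)"

definition descend_step :: "(nat \<Rightarrow> 'a \<Rightarrow> 'a) \<Rightarrow> ('a node \<Rightarrow> 'a node \<Rightarrow> 'a node) \<Rightarrow> nat \<Rightarrow> 'a \<Rightarrow> 'a node \<Rightarrow> 'a node" where
  "descend_step par sr h q u =
     (if fst u \<le> h then sr u (0, q) else (fst u - 1, up par 0 q (fst u - 1)))"

definition is_anc_of :: "(nat \<Rightarrow> 'a \<Rightarrow> 'a) \<Rightarrow> 'a \<Rightarrow> 'a node \<Rightarrow> bool" where
  "is_anc_of par q u \<longleftrightarrow> snd u = up par 0 q (fst u)"

definition route_step ::
  "('a \<Rightarrow> 'a \<Rightarrow> real) \<Rightarrow> (nat \<Rightarrow> 'a \<Rightarrow> 'a) \<Rightarrow> ('a node \<Rightarrow> 'a node \<Rightarrow> 'a node) \<Rightarrow> real \<Rightarrow> nat \<Rightarrow> int \<Rightarrow> 'a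
   \<Rightarrow> phase \<times> 'a node \<Rightarrow> phase \<times> 'a node" where
  "route_step d par sr \<gamma> h i q s =
     (let ph = fst s; u = snd s;
          srch = (if is_anc_of par q u then (Desc, descend_step par sr h q u)
                  else (Srch, search_step d par \<gamma> q u))
      in if u = (0, q) then s
         else (case ph of
                 Asc \<Rightarrow> (if int (fst u) < i then (Asc, ascend_step par sr h i u) else srch)
               | Srch \<Rightarrow> srch
               | Desc \<Rightarrow> (Desc, descend_step par sr h q u)))"

definition route_state ::
  "'a set \<Rightarrow> ('a \<Rightarrow> 'a \<Rightarrow> real) \<Rightarrow> (nat \<Rightarrow> 'a \<Rightarrow> 'a) \<Rightarrow> ('a node \<Rightarrow> 'a node \<Rightarrow> 'a node) \<Rightarrow>
   ('a \<Rightarrow> 'a \<Rightarrow> real) \<Rightarrow> real \<Rightarrow> real \<Rightarrow> 'a \<Rightarrow> 'a \<Rightarrow> nat \<Rightarrow> phase \<times> 'a node" where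
  "route_state M d par sr dt \<delta> \<gamma> p q m =
     (route_step d par sr \<gamma> (light_level M d) (target_level dt \<delta> \<gamma> p q) q ^^ m) (Asc, (0, p))"

definition spanner_edge :: "('a \<Rightarrow> 'a \<Rightarrow> real) \<Rightarrow> (nat \<Rightarrow> 'a \<Rightarrow> 'a) \<Rightarrow> real \<Rightarrow> ('a node \<times> 'a node) set \<Rightarrow> 'a node \<Rightarrow> 'a node \<Rightarrow> bool" where
  "spanner_edge d par \<gamma> S u w \<longleftrightarrow>
     tree_edge par u w \<or> cross_edge d \<gamma> u w \<or> (u, w) \<in> S \<or> (w, u) \<in> S"

end

theory Submission
  imports Defs
begin

lemma run_lemma:
  fixes F :: "'s \<Rightarrow> 's" and T :: "'s \<Rightarrow> nat" and Phi :: "'s \<Rightarrow> real"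
  assumes step: "\<And>s. Inv s \<Longrightarrow> \<not> Fin s \<Longrightarrow>
      Inv (F s) \<and> T (F s) < T s \<and> cost s (F s) \<le> Phi s - Phi (F s) \<and> E s (F s)"
  shows "Inv s0 \<Longrightarrow> \<exists>m \<le> T s0. Fin ((F^^m) s0) \<and> (\<forall>j<m. E ((F^^j) s0) ((F^^Suc j) s0)) \<and>
     (\<Sum>j<m. cost ((F^^j) s0) ((F^^Suc j) s0)) \<le> Phi s0 - Phi ((F^^m) s0)"
proof (induction "T s0" arbitrary: s0 rule: less_induct)
  case less
  show ?case
  proof (cases "Fin s0")
    case True
    then show ?thesis by (intro exI[of _ 0]) auto
  next
    case False
    from step[OF less.prems False] have st: "Inv (F s0)" "T (F s0) < T s0"
      "cost s0 (F s0) \<le> Phi s0 - Phi (F s0)" "E s0 (F s0)" by auto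
    from less.hyps[OF st(2) st(1)] obtain m where m: "m \<le> T (F s0)" "Fin ((F^^m) (F s0))"
      "\<forall>j<m. E ((F^^j) (F s0)) ((F^^Suc j) (F s0))"
      "(\<Sum>j<m. cost ((F^^j) (F s0)) ((F^^Suc j) (F s0))) \<le> Phi (F s0) - Phi ((F^^m) (F s0))"
      by blast
    have fs: "\<And>j. (F^^Suc j) s0 = (F^^j) (F s0)" by (simp add: funpow_Suc_right del: funpow.simps)
    show ?thesis
    proof (intro exI[of _ "Suc m"] conjI allI impI)
      show "Suc m \<le> T s0" using m(1) st(2) by simp
      show "Fin ((F^^Suc m) s0)" using m(2) fs by simp
      fix j assume "j < Suc m"
      then show "E ((F^^j) s0) ((F^^Suc j) s0)"
        using m(3) st(4) fs by (cases j) (auto simp del: funpow.simps)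
    next
      have "(\<Sum>j<Suc m. cost ((F^^j) s0) ((F^^Suc j) s0)) =
          cost s0 (F s0) + (\<Sum>j<m. cost ((F^^j) (F s0)) ((F^^Suc j) (F s0)))"
        by (subst sum.lessThan_Suc_shift) (simp add: fs del: funpow.simps)
      also have "\<dots> \<le> Phi s0 - Phi ((F^^Suc m) s0)"
        using m(4) st(3) fs[of m] by simp
      finally show "(\<Sum>j<Suc m. cost ((F^^j) s0) ((F^^Suc j) s0)) \<le> Phi s0 - Phi ((F^^Suc m) s0)" .
    qed
  qed
qed

definition mu :: "('b \<Rightarrow> 'b) \<Rightarrow> 'b \<Rightarrow> 'b \<Rightarrow> nat" where
  "mu g t w = (LEAST k. (g ^^ k) w = t)"

lemma mu_le: "(g ^^ k) w = t \<Longrightarrow> mu g t w \<le> k"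
  unfolding mu_def by (rule Least_le)

lemma mu_dec: assumes "(g ^^ k) w = t" "w \<noteq> t" shows "mu g t (g w) < mu g t w"
proof -
  have e: "(g ^^ mu g t w) w = t" unfolding mu_def by (rule LeastI[of _ k]) (rule assms(1))
  then obtain k1 where k1: "mu g t w = Suc k1" using assms(2) by (cases "mu g t w") auto
  have "(g ^^ k1) (g w) = t" using e k1 by (simp add: funpow_Suc_right del: funpow.simps)
  then have "mu g t (g w) \<le> k1" by (rule mu_le)
  then show ?thesis using k1 by simp
qed

lemma up_add: "up par l (up par 0 x l) k = up par 0 x (l + k)"
  by (induction k) auto

definition ch :: "(nat \<Rightarrow> 'a \<Rightarrow> 'a) \<Rightarrow> 'a \<Rightarrow> nat \<Rightarrow> 'a node" where
  "ch par x l = (l, up par 0 x l)"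

lemma anc_ch: "anc_set par L (ch par x l) = {ch par x j | j. l \<le> j \<and> j \<le> L}"
  unfolding anc_set_def ch_def
  apply (auto simp: up_add)
  apply (rule_tac x="j - l" in exI)
  apply auto
  done

lemma ch_eq: "ch par x j = ch par y k \<longleftrightarrow> j = k \<and> up par 0 x j = up par 0 y k"
  by (auto simp: ch_def)

lemma tree_path_ch: assumes "l \<le> L" "m \<le> L"
  shows "tree_path par L (ch par x l) (ch par x m) \<subseteq>
    {ch par x j | j. min l m \<le> j \<and> j \<le> max l m}"
proof
  fix w assume w: "w \<in> tree_path par L (ch par x l) (ch par x m)"
  have mem: "ch par x (max l m) \<in> anc_set par L (ch par x l) \<inter> anc_set par L (ch par x m)"
    using assms unfolding anc_ch by auto
  from w show "w \<in> {ch par x j | j. min l m \<le> j \<and> j \<le> max l m}"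
    unfolding tree_path_def
  proof (elim UnE)
    assume "w \<in> anc_set par L (ch par x l) - anc_set par L (ch par x m)"
    then show ?thesis unfolding anc_ch by (auto simp: ch_eq) (metis le_refl min.coboundedI1 min.coboundedI2 max.coboundedI1 max.coboundedI2 not_le less_imp_le)+
  next
    assume "w \<in> anc_set par L (ch par x m) - anc_set par L (ch par x l)"
    then show ?thesis unfolding anc_ch by (auto simp: ch_eq) (metis le_refl min.coboundedI1 min.coboundedI2 max.coboundedI1 max.coboundedI2 not_le less_imp_le)+
  next
    assume a: "w \<in> {w \<in> anc_set par L (ch par x l) \<inter> anc_set par L (ch par x m).
        \<forall>w'\<in>anc_set par L (ch par x l) \<inter> anc_set par L (ch par x m). fst w \<le> fst w'}"
    then have "fst w \<le> fst (ch par x (max l m))" using mem by blast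
    then have "fst w \<le> max l m" by (simp add: ch_def)
    with a show ?thesis unfolding anc_ch by (auto simp: ch_def)
  qed
qed

locale rt =
  fixes M :: "'a set" and d :: "'a \<Rightarrow> 'a \<Rightarrow> real" and N :: "nat \<Rightarrow> 'a set" and L :: nat
    and par :: "nat \<Rightarrow> 'a \<Rightarrow> 'a" and sr :: "'a node \<Rightarrow> 'a node \<Rightarrow> 'a node"
    and S :: "('a node \<times> 'a node) set"
    and dt :: "'a \<Rightarrow> 'a \<Rightarrow> real" and p q :: 'a and \<epsilon> \<gamma> \<delta> c :: real and K0 :: nat
  assumes eps: "\<epsilon> > 0" and gam: "\<gamma> > 4" and del: "\<delta> > 0" and cpos: "c > 0"
    and K0: "2 * ((1+\<delta>)*(\<gamma>+4)) / (\<gamma> - 4) < 2 ^ K0"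
    and finM: "finite M" and met: "metric_on M d"
    and net: "is_net_seq M d N L" and pf: "is_parent_fun N L d par"
    and srt: "spanner_router sr S N L par (light_level M d) c (card M)"
    and al: "approx_labelling M d \<delta> dt" and gok: "gamma_ok M d par \<gamma> \<epsilon>"
    and pM: "p \<in> M" and qM: "q \<in> M" and pq: "p \<noteq> q"
begin

lemma dsym: "x \<in> M \<Longrightarrow> y \<in> M \<Longrightarrow> d x y = d y x"
  using met unfolding metric_on_def by blast
lemma dnn: "x \<in> M \<Longrightarrow> y \<in> M \<Longrightarrow> 0 \<le> d x y"
  using met unfolding metric_on_def by blast
lemma d0: "x \<in> M \<Longrightarrow> d x x = 0"
  using met unfolding metric_on_def by blast
lemma dtri: "x \<in> M \<Longrightarrow> y \<in> M \<Longrightarrow> z \<in> M \<Longrightarrow> d x z \<le> d x y + d y z"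
  using met unfolding metric_on_def by blast

lemma N_sub: "i \<le> L \<Longrightarrow> N i \<subseteq> M"
proof (induction i)
  case 0 then show ?case using net by (simp add: is_net_seq_def)
next
  case (Suc i)
  have "N (Suc i) \<subseteq> N i" using net Suc.prems unfolding is_net_seq_def by auto
  then show ?case using Suc by auto
qed

lemma up_in: "x \<in> M \<Longrightarrow> j \<le> L \<Longrightarrow> up par 0 x j \<in> N j"
proof (induction j)
  case 0 then show ?case using net by (simp add: is_net_seq_def)
next
  case (Suc j) then show ?case using pf unfolding is_parent_fun_def by auto
qed

lemma up_M: "x \<in> M \<Longrightarrow> j \<le> L \<Longrightarrow> up par 0 x j \<in> M"
  using up_in N_sub by blast

lemma up_step: "x \<in> M \<Longrightarrow> j < L \<Longrightarrow> d (up par 0 x j) (up par 0 x (Suc j)) \<le> 2 ^ Suc j"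
  using pf up_in[of x j] unfolding is_parent_fun_def by auto

lemma up_dist: "x \<in> M \<Longrightarrow> j \<le> L \<Longrightarrow> d (up par 0 x j) x \<le> 2 ^ (j+1) - 2"
proof (induction j)
  case 0 then show ?case by (simp add: d0)
next
  case (Suc j)
  have "d (up par 0 x (Suc j)) x \<le> d (up par 0 x (Suc j)) (up par 0 x j) + d (up par 0 x j) x"
    using Suc.prems by (intro dtri up_M) auto
  also have "d (up par 0 x (Suc j)) (up par 0 x j) = d (up par 0 x j) (up par 0 x (Suc j))"
    using Suc.prems by (intro dsym up_M) auto
  also have "\<dots> \<le> 2 ^ Suc j" using Suc.prems by (intro up_step) auto
  finally show ?case using Suc by simp
qed

lemma chain_le: "x \<in> M \<Longrightarrow> l \<le> l' \<Longrightarrow> l' \<le> L \<Longrightarrow>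
   d (up par 0 x l) (up par 0 x l') \<le> (\<Sum>j\<in>{l..<l'}. d (up par 0 x j) (up par 0 x (Suc j)))"
proof (induction l')
  case 0 then show ?case by (simp add: d0 up_M)
next
  case (Suc l')
  show ?case
  proof (cases "l = Suc l'")
    case True
    have "up par 0 x (Suc l') \<in> M" using Suc.prems by (intro up_M) auto
    then show ?thesis using True by (simp add: d0 del: up.simps)
  next
    case False
    then have ll: "l \<le> l'" using Suc.prems by simp
    have "d (up par 0 x l) (up par 0 x (Suc l')) \<le> d (up par 0 x l) (up par 0 x l') + d (up par 0 x l') (up par 0 x (Suc l'))"
      using Suc.prems by (intro dtri up_M) auto
    also have "\<dots> \<le> (\<Sum>j\<in>{l..<l'}. d (up par 0 x j) (up par 0 x (Suc j))) + d (up par 0 x l') (up par 0 x (Suc l'))"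
      using Suc ll by simp
    finally show ?thesis using ll by simp
  qed
qed

definition "hL = light_level M d"
definition "iT = target_level dt \<delta> \<gamma> p q"
definition "aT = nat iT"
definition "m0 = min aT hL"
definition "i0 = (LEAST i. d (up par 0 p i) (up par 0 q i) \<le> \<gamma> * 2^i)"

lemma nodes_ch: "x \<in> M \<Longrightarrow> l \<le> L \<Longrightarrow> ch par x l \<in> nodes N L"
  using up_in by (auto simp: nodes_def ch_def)

lemma light_ch: "l \<le> hL \<Longrightarrow> m \<le> hL \<Longrightarrow> same_light par hL (ch par x l) (ch par x m)"
  unfolding same_light_def ch_def by (simp add: up_add)

lemma sr_chain: assumes "x \<in> M" "l \<le> L" "m \<le> L" "l \<le> hL" "m \<le> hL" "l \<noteq> m"
  shows "\<exists>j. sr (ch par x l) (ch par x m) = ch par x j \<and> min l m \<le> j \<and> j \<le> max l m \<and> j \<noteq> l \<and>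
     spanner_edge d par \<gamma> S (ch par x l) (ch par x j)"
proof -
  let ?u = "ch par x l" and ?t = "ch par x m"
  have ne: "?u \<noteq> ?t" using assms(6) by (simp add: ch_def)
  have st: "sr ?u ?t \<in> tree_path par L ?u ?t \<and> sr ?u ?t \<noteq> ?u \<and>
        (tree_edge par ?u (sr ?u ?t) \<or> (?u, sr ?u ?t) \<in> S \<or> (sr ?u ?t, ?u) \<in> S)"
    using srt nodes_ch[OF assms(1,2)] nodes_ch[OF assms(1,3)] light_ch[OF assms(4,5), of x] ne
    unfolding spanner_router_def hL_def by blast
  then obtain j where j: "sr ?u ?t = ch par x j" "min l m \<le> j" "j \<le> max l m"
    using tree_path_ch[OF assms(2,3), of par x] by blast
  show ?thesis
    using st j by (intro exI[of _ j]) (auto simp: spanner_edge_def)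
qed

lemma sr_reach: assumes "x \<in> M" "l \<le> L" "m \<le> L" "l \<le> hL" "m \<le> hL"
  shows "\<exists>k. real k \<le> c * log 2 (real (card M)) \<and> ((\<lambda>w. sr w (ch par x m)) ^^ k) (ch par x l) = ch par x m"
  using srt nodes_ch[OF assms(1,2)] nodes_ch[OF assms(1,3)] light_ch[OF assms(4,5), of x]
  unfolding spanner_router_def hL_def by blast

lemma mu_bound: assumes "x \<in> M" "l \<le> L" "m \<le> L" "l \<le> hL" "m \<le> hL"
  shows "real (mu (\<lambda>w. sr w (ch par x m)) (ch par x m) (ch par x l)) \<le> c * log 2 (real (card M))"
proof -
  obtain k where "real k \<le> c * log 2 (real (card M))" "((\<lambda>w. sr w (ch par x m)) ^^ k) (ch par x l) = ch par x m"
    using sr_reach[OF assms] by blast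
  then show ?thesis using mu_le by (metis of_nat_le_iff order_trans)
qed

lemma mu_dec_ch: assumes "x \<in> M" "l \<le> L" "m \<le> L" "l \<le> hL" "m \<le> hL" "l \<noteq> m"
  shows "mu (\<lambda>w. sr w (ch par x m)) (ch par x m) (sr (ch par x l) (ch par x m))
       < mu (\<lambda>w. sr w (ch par x m)) (ch par x m) (ch par x l)"
proof -
  obtain k where "((\<lambda>w. sr w (ch par x m)) ^^ k) (ch par x l) = ch par x m"
    using sr_reach[OF assms(1-5)] by blast
  from mu_dec[OF this] show ?thesis using assms(6) by (simp add: ch_def)
qed

lemma card2: "2 \<le> card M"
proof -
  have "{p, q} \<subseteq> M" using pM qM by auto
  then have "card {p, q} \<le> card M" using finM by (rule card_mono[rotated])
  then show ?thesis using pq by simp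
qed

lemma logn1: "1 \<le> log 2 (real (card M))"
  using card2 by simp

lemma dpq_pos: "0 < d p q"
  using met pM qM pq unfolding metric_on_def by fastforce

lemma dt_ge: "d p q \<le> dt p q" and dt_le: "dt p q \<le> (1+\<delta>) * d p q"
  using al pM qM unfolding approx_labelling_def by auto

lemma dt_pos: "0 < dt p q" using dpq_pos dt_ge by linarith

lemma top_eq: "up par 0 p L = up par 0 q L"
proof -
  obtain r where "N L = {r}" using net unfolding is_net_seq_def by blast
  then show ?thesis using up_in[OF pM, of L] up_in[OF qM, of L] by auto
qed

lemma i0_ex: "d (up par 0 p L) (up par 0 q L) \<le> \<gamma> * 2^L"
  using top_eq d0 up_M[OF qM, of L] gam by simp

lemma i0_le_L: "i0 \<le> L"
  unfolding i0_def by (rule Least_le) (rule i0_ex)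

lemma i0_prop: "d (up par 0 p i0) (up par 0 q i0) \<le> \<gamma> * 2^i0"
  unfolding i0_def by (rule LeastI) (rule i0_ex)

lemma below_i0: "l < i0 \<Longrightarrow> \<gamma> * 2^l < d (up par 0 p l) (up par 0 q l)"
  unfolding i0_def using not_less_Least by fastforce

lemma tri4: assumes "j \<le> L"
  shows "d p q \<le> d (up par 0 p j) (up par 0 q j) + (4 * 2^j - 4)"
    and "d (up par 0 p j) (up par 0 q j) \<le> d p q + (4 * 2^j - 4)"
proof -
  have m: "up par 0 p j \<in> M" "up par 0 q j \<in> M" using up_M pM qM assms by auto
  have a1: "d (up par 0 p j) p \<le> 2^(j+1) - 2" "d (up par 0 q j) q \<le> 2^(j+1) - 2"
    using up_dist pM qM assms by auto
  have "d p q \<le> d p (up par 0 p j) + d (up par 0 p j) q" using m pM qM by (intro dtri) auto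
  also have "d (up par 0 p j) q \<le> d (up par 0 p j) (up par 0 q j) + d (up par 0 q j) q"
    using m pM qM by (intro dtri) auto
  finally show "d p q \<le> d (up par 0 p j) (up par 0 q j) + (4 * 2^j - 4)"
    using a1 dsym[OF m(1) pM] by simp
  have "d (up par 0 p j) (up par 0 q j) \<le> d (up par 0 p j) p + d p (up par 0 q j)"
    using m pM qM by (intro dtri) auto
  also have "d p (up par 0 q j) \<le> d p q + d q (up par 0 q j)"
    using m pM qM by (intro dtri) auto
  finally show "d (up par 0 p j) (up par 0 q j) \<le> d p q + (4 * 2^j - 4)"
    using a1 dsym[OF m(2) qM] by simp
qed

definition "AA = (1+\<delta>)*(\<gamma>+4)"

lemma AA_pos: "AA > 0" using del gam by (simp add: AA_def)

lemma aT_low: assumes "0 < iT" shows "(\<gamma>+4) * 2^aT \<le> d p q"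
proof -
  have "real_of_int iT \<le> log 2 (dt p q / AA)"
    unfolding iT_def target_level_def AA_def by simp
  moreover have "real aT = real_of_int iT" using assms by (simp add: aT_def)
  ultimately have "real aT \<le> log 2 (dt p q / AA)" by simp
  then have "2 powr real aT \<le> dt p q / AA"
    using le_log_iff[of 2 "dt p q / AA"] dt_pos AA_pos by simp
  then have "2 ^ aT \<le> dt p q / AA" by (simp add: powr_realpow)
  then have "2 ^ aT * AA \<le> dt p q" using AA_pos by (simp add: field_simps)
  also have "\<dots> \<le> (1+\<delta>) * d p q" by (rule dt_le)
  finally have "(1+\<delta>) * ((\<gamma>+4) * 2^aT) \<le> (1+\<delta>) * d p q" by (simp add: AA_def algebra_simps)
  then show ?thesis using del by simp
qed

lemma aT_le_i0: "aT \<le> i0"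
proof (cases "0 < iT")
  case False then show ?thesis by (simp add: aT_def)
next
  case True
  show ?thesis
  proof (rule ccontr)
    assume "\<not> aT \<le> i0"
    then have lt: "i0 < aT" by simp
    have "d p q \<le> d (up par 0 p i0) (up par 0 q i0) + (4 * 2^i0 - 4)"
      using tri4(1)[OF i0_le_L] .
    moreover have "(\<gamma>+4) * 2^aT \<le> d p q" by (rule aT_low[OF True])
    moreover have "(2::real)^i0 \<le> 2^aT" using lt by simp
    moreover have "\<gamma> * 2^i0 \<le> \<gamma> * 2^aT" using gam lt by (intro mult_left_mono) auto
    moreover have "(\<gamma>+4) * 2^aT = \<gamma> * 2^aT + 4 * 2^aT" by (simp add: algebra_simps)
    ultimately have "\<gamma> * 2^i0 < d (up par 0 p i0) (up par 0 q i0)"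
      by linarith
    then show False using i0_prop by simp
  qed
qed

lemma i0_up: "i0 \<le> aT + K0"
proof (cases "L \<le> aT + K0")
  case True then show ?thesis using i0_le_L by simp
next
  case False
  let ?j = "aT + K0"
  have "log 2 (dt p q / AA) < real_of_int iT + 1"
    unfolding iT_def target_level_def AA_def by simp
  also have "real_of_int iT \<le> real aT" by (simp add: aT_def)
  finally have "log 2 (dt p q / AA) < real (aT + 1)" by simp
  then have "dt p q / AA < 2 powr real (aT+1)"
    using log_less_iff[of 2 "dt p q / AA"] dt_pos AA_pos by simp
  moreover have "2 powr real (aT+1) = 2^(aT+1)" by (rule powr_realpow) simp
  ultimately have "dt p q < AA * 2^(aT+1)" using AA_pos by (simp add: field_simps)
  also have "AA * 2^(aT+1) = (2*AA) * 2^aT" by simp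
  also have "2 * AA < (\<gamma> - 4) * 2^K0" using K0 gam by (simp add: AA_def field_simps)
  then have "(2*AA) * 2^aT < ((\<gamma> - 4) * 2^K0) * 2^aT" by simp
  also have "\<dots> = (\<gamma> - 4) * 2^?j" by (simp add: power_add)
  finally have "dt p q < (\<gamma> - 4) * 2^?j" .
  moreover have "d (up par 0 p ?j) (up par 0 q ?j) \<le> d p q + (4 * 2^?j - 4)"
    using tri4(2) False by simp
  ultimately have "d (up par 0 p ?j) (up par 0 q ?j) \<le> \<gamma> * 2^?j"
    using dt_ge by (simp add: algebra_simps)
  then show ?thesis unfolding i0_def by (rule Least_le)
qed

lemma diam_ge: "d p q \<le> diam M d"
proof -
  have "finite {d x y | x y. x \<in> M \<and> y \<in> M}"
    using finM by (intro finite_image_set2) auto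
  then show ?thesis unfolding diam_def using pM qM by (intro Max_ge) auto
qed

lemma aT_le_h: "real aT \<le> real hL + 1 + log 2 (real (card M))"
proof (cases "0 < iT")
  case False then show ?thesis using logn1 by (simp add: aT_def)
next
  case True
  let ?D = "diam M d"
  have Dpos: "0 < ?D" using diam_ge dpq_pos by linarith
  have "real aT = real_of_int iT" using True by (simp add: aT_def)
  also have "real_of_int iT \<le> log 2 (dt p q / AA)"
    unfolding iT_def target_level_def AA_def by simp
  also have "dt p q / AA \<le> ?D"
  proof -
    have "dt p q \<le> (1+\<delta>) * d p q" by (rule dt_le)
    also have "\<dots> \<le> AA * d p q" using dpq_pos gam del by (simp add: AA_def algebra_simps)
    also have "\<dots> \<le> AA * ?D" using diam_ge AA_pos by simp
    finally show ?thesis using AA_pos by (simp add: field_simps)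
  qed
  then have "log 2 (dt p q / AA) \<le> log 2 ?D"
    using dt_pos AA_pos by (intro log_mono) auto
  also have "log 2 ?D = log 2 (?D / real (card M)) + log 2 (real (card M))"
    using Dpos card2 by (simp add: log_divide_pos)
  also have "log 2 (?D / real (card M)) \<le> real hL + 1"
  proof -
    have "log 2 (?D / real (card M)) < real_of_int \<lfloor>log 2 (?D / real (card M))\<rfloor> + 1" by simp
    moreover have "real_of_int \<lfloor>log 2 (?D / real (card M))\<rfloor> \<le> real hL"
      unfolding hL_def light_level_def by simp
    ultimately show ?thesis by linarith
  qed
  finally show ?thesis by simp
qed

definition "dq j = d (up par 0 q j) (up par 0 q (Suc j))"
definition "dp j = d (up par 0 p j) (up par 0 p (Suc j))"
definition "QF l = (\<Sum>j\<in>{0..<l}. dq j)"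
definition "PF l = (\<Sum>j\<in>{l..<i0}. dp j) + d (up par 0 p i0) (up par 0 q i0) + QF i0"
definition "muQ l = mu (\<lambda>w. sr w (ch par q 0)) (ch par q 0) (ch par q l)"
definition "muP l = mu (\<lambda>w. sr w (ch par p m0)) (ch par p m0) (ch par p l)"
definition "TQ l = (if l \<le> hL then muQ l else (l - hL) + muQ hL)"
definition "TP ph l = (if ph = Asc \<and> l < m0 then muP l + (i0 - m0) else i0 - l) + 1 + TQ i0"

lemma q0: "ch par q 0 = (0, q)" by (simp add: ch_def)
lemma p0: "ch par p 0 = (0, p)" by (simp add: ch_def)

lemma chain_sum: "x \<in> M \<Longrightarrow> l \<le> l' \<Longrightarrow> l' \<le> L \<Longrightarrow>
   d (up par 0 x l) (up par 0 x l') \<le> (\<Sum>j\<in>{l..<l'}. d (up par 0 x j) (up par 0 x (Suc j)))"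
  by (rule chain_le)

lemma desc_step: assumes "0 < l" "l \<le> i0"
  shows "\<exists>l'<l. descend_step par sr hL q (ch par q l) = ch par q l' \<and> TQ l' < TQ l \<and>
     d (up par 0 q l) (up par 0 q l') \<le> QF l - QF l' \<and> spanner_edge d par \<gamma> S (ch par q l) (ch par q l')"
proof (cases "l \<le> hL")
  case True
  have lL: "l \<le> L" using assms i0_le_L by simp
  have ds: "descend_step par sr hL q (ch par q l) = sr (ch par q l) (ch par q 0)"
    using True by (simp add: descend_step_def ch_def)
  obtain j where j: "sr (ch par q l) (ch par q 0) = ch par q j" "j \<le> l" "j \<noteq> l"
      "spanner_edge d par \<gamma> S (ch par q l) (ch par q j)"
    using sr_chain[OF qM lL _ True, of 0] assms by auto
  have jl: "j < l" using j by simp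
  have "TQ j < TQ l"
    using mu_dec_ch[OF qM lL _ True, of 0] assms jl True j(1) by (simp add: TQ_def muQ_def)
  moreover have "d (up par 0 q l) (up par 0 q j) \<le> QF l - QF j"
  proof -
    have "d (up par 0 q l) (up par 0 q j) = d (up par 0 q j) (up par 0 q l)"
      using jl lL by (intro dsym up_M qM) auto
    also have "\<dots> \<le> (\<Sum>k\<in>{j..<l}. dq k)" unfolding dq_def using jl lL by (intro chain_le qM) auto
    also have "\<dots> = QF l - QF j" unfolding QF_def using sum.atLeastLessThan_concat[of 0 j l dq] jl by simp
    finally show ?thesis .
  qed
  ultimately show ?thesis using ds j jl by (intro exI[of _ j]) simp
next
  case False
  have lL: "l \<le> L" using assms i0_le_L by simp
  have ds: "descend_step par sr hL q (ch par q l) = ch par q (l - 1)"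
    using False by (simp add: descend_step_def ch_def)
  have "TQ (l - 1) < TQ l"
  proof (cases "l - 1 \<le> hL")
    case True
    then have "l - 1 = hL" using False by simp
    then show ?thesis using False by (simp add: TQ_def)
  next
    case F2: False
    then show ?thesis using False by (simp add: TQ_def)
  qed
  moreover have "d (up par 0 q l) (up par 0 q (l - 1)) \<le> QF l - QF (l - 1)"
  proof -
    have e: "Suc (l - 1) = l" using assms by simp
    have "d (up par 0 q l) (up par 0 q (l - 1)) = d (up par 0 q (l-1)) (up par 0 q l)"
      using lL by (intro dsym up_M qM) auto
    also have "\<dots> = dq (l - 1)" unfolding dq_def using e by simp
    also have "\<dots> = QF l - QF (l - 1)" unfolding QF_def using e
      by (metis add_diff_cancel_left' sum.atLeast0_lessThan_Suc)
    finally show ?thesis by simp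
  qed
  moreover have "spanner_edge d par \<gamma> S (ch par q l) (ch par q (l - 1))"
  proof -
    have e: "Suc (l - 1) = l" using assms by simp
    have "parent_node par (ch par q (l - 1)) = ch par q l"
      unfolding parent_node_def ch_def using e by (metis fst_conv snd_conv up.simps(2) plus_nat.add_0)
    then show ?thesis unfolding spanner_edge_def tree_edge_def by simp
  qed
  ultimately show ?thesis using ds assms by (intro exI[of _ "l - 1"]) auto
qed

definition "FF = route_step d par sr \<gamma> hL iT q"
definition "isP s = (fst s \<noteq> Desc \<and> snd s = ch par p (fst (snd s)))"
definition "Phi s = (if isP s then PF (fst (snd s)) else QF (fst (snd s)))"
definition "Tm s = (if isP s then TP (fst s) (fst (snd s)) else TQ (fst (snd s)))"
definition "Inv s = ((\<exists>l. s = (Asc, ch par p l) \<and> l \<le> aT) \<or> (\<exists>l. s = (Srch, ch par p l) \<and> l \<le> i0) \<or>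
   (s = (Srch, ch par q i0) \<and> up par 0 p i0 \<noteq> up par 0 q i0) \<or> (\<exists>l. s = (Desc, ch par q l) \<and> l \<le> i0))"
definition "Fin s = (snd s = (0, q))"
definition "EE s s' = (snd s' \<noteq> snd s \<and> spanner_edge d par \<gamma> S (snd s) (snd s'))"
definition "cost s s' = d (snd (snd s)) (snd (snd s'))"

definition "good s s' = (Inv s' \<and> Tm s' < Tm s \<and> cost s s' \<le> Phi s - Phi s' \<and> EE s s')"

lemma P_nf: "ch par p l \<noteq> (0, q)"
  using pq by (cases l) (auto simp: ch_def)

lemma isP_P: "ph \<noteq> Desc \<Longrightarrow> isP (ph, ch par p l)"
  by (simp add: isP_def ch_def)

lemma m0_le: "m0 \<le> aT" "m0 \<le> hL" "aT \<le> L" "i0 \<le> L"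
  using aT_le_i0 i0_le_L by (auto simp: m0_def)

lemma good_desc: assumes "0 < l" "l \<le> i0" "\<not> isP (ph, ch par q l)"
  "FF (ph, ch par q l) = (Desc, descend_step par sr hL q (ch par q l))"
  shows "good (ph, ch par q l) (FF (ph, ch par q l))"
proof -
  obtain l' where l': "l' < l" "descend_step par sr hL q (ch par q l) = ch par q l'" "TQ l' < TQ l"
    "d (up par 0 q l) (up par 0 q l') \<le> QF l - QF l'" "spanner_edge d par \<gamma> S (ch par q l) (ch par q l')"
    using desc_step[OF assms(1,2)] by blast
  have ne: "ch par q l' \<noteq> ch par q l" using l'(1) by (simp add: ch_def)
  have t1: "Tm (ph, ch par q l) = TQ l" "Phi (ph, ch par q l) = QF l"
    using assms(3) by (simp_all add: Tm_def Phi_def ch_def)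
  have np: "\<not> isP (Desc, ch par q l')" by (simp add: isP_def)
  have t2: "Tm (Desc, ch par q l') = TQ l'" "Phi (Desc, ch par q l') = QF l'"
    using np by (simp_all add: Tm_def Phi_def ch_def)
  have iv: "Inv (Desc, ch par q l')" using l'(1) assms(2) by (auto simp: Inv_def)
  show ?thesis unfolding assms(4) l'(2) good_def
    using t1 t2 iv l' ne by (simp add: cost_def EE_def ch_def)
qed

lemma fst_ch[simp]: "fst (ch par x l) = l" and snd_ch[simp]: "snd (ch par x l) = up par 0 x l"
  by (simp_all add: ch_def)

lemma rs_nf: "snd s \<noteq> (0,q) \<Longrightarrow> route_step d par sr \<gamma> h i q s =
   (let u = snd s; srch = (if is_anc_of par q u then (Desc, descend_step par sr h q u)
       else (Srch, search_step d par \<gamma> q u))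
    in case fst s of Asc \<Rightarrow> (if int (fst u) < i then (Asc, ascend_step par sr h i u) else srch)
     | Srch \<Rightarrow> srch | Desc \<Rightarrow> (Desc, descend_step par sr h q u))"
  by (simp add: route_step_def Let_def)

lemma FF_P: "FF (ph, ch par p l) = (let u = ch par p l; srch = (if is_anc_of par q u then (Desc, descend_step par sr hL q u)
       else (Srch, search_step d par \<gamma> q u))
    in case ph of Asc \<Rightarrow> (if int l < iT then (Asc, ascend_step par sr hL iT u) else srch)
     | Srch \<Rightarrow> srch | Desc \<Rightarrow> (Desc, descend_step par sr hL q u))"
proof -
  have "snd (ph, ch par p l) \<noteq> (0, q)" using P_nf[of l] by simp
  from rs_nf[OF this] show ?thesis unfolding FF_def by (simp add: Let_def)
qed

lemma FF_desc: "0 < l \<Longrightarrow> FF (Desc, ch par q l) = (Desc, descend_step par sr hL q (ch par q l))"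
  by (simp add: FF_def route_step_def Let_def ch_def)

lemma FF_srchQ: "0 < l \<Longrightarrow> FF (Srch, ch par q l) = (Desc, descend_step par sr hL q (ch par q l))"
  by (simp add: FF_def route_step_def Let_def ch_def is_anc_of_def)

lemma FF_srch: assumes "ph \<noteq> Desc" "ph = Asc \<Longrightarrow> aT \<le> l"
  shows "FF (ph, ch par p l) = (if is_anc_of par q (ch par p l) then (Desc, descend_step par sr hL q (ch par p l))
     else (Srch, search_step d par \<gamma> q (ch par p l)))"
proof (cases ph)
  case Asc
  then have "\<not> int l < iT" using assms(2) by (simp add: aT_def)
  then show ?thesis using Asc by (simp add: FF_P Let_def)
next
  case Srch
  then show ?thesis by (simp add: FF_P Let_def)
qed (use assms in simp)

lemma TP_P: "ph \<noteq> Desc \<Longrightarrow> Tm (ph, ch par p l) = TP ph l"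
  and PhiP: "ph \<noteq> Desc \<Longrightarrow> Phi (ph, ch par p l) = PF l"
  by (simp_all add: Tm_def Phi_def isP_P)

lemma PF_split: "l \<le> j \<Longrightarrow> j \<le> i0 \<Longrightarrow> PF l - PF j = (\<Sum>k\<in>{l..<j}. dp k)"
  unfolding PF_def using sum.atLeastLessThan_concat[of l j i0 dp] by simp

lemma parent_P: "parent_node par (ch par x l) = ch par x (Suc l)"
  by (simp add: parent_node_def ch_def)

lemma good_asc_light: assumes "l < m0" shows "good (Asc, ch par p l) (FF (Asc, ch par p l))"
proof -
  have lt: "int l < iT" using assms m0_le by (simp add: aT_def)
  have lh: "l < hL" using assms m0_le by simp
  have e: "(m0, up par l (up par 0 p l) (m0 - l)) = ch par p m0"
    using assms by (simp add: up_add ch_def)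
  have asc: "ascend_step par sr hL iT (ch par p l) = sr (ch par p l) (ch par p m0)"
    using lh e by (simp add: ascend_step_def Let_def m0_def aT_def)
  have ff: "FF (Asc, ch par p l) = (Asc, sr (ch par p l) (ch par p m0))"
    using lt asc by (simp add: FF_P Let_def)
  have lL: "l \<le> L" "m0 \<le> L" using assms m0_le by auto
  obtain j where j: "sr (ch par p l) (ch par p m0) = ch par p j" "l \<le> j" "j \<le> m0" "j \<noteq> l"
      "spanner_edge d par \<gamma> S (ch par p l) (ch par p j)"
    using sr_chain[OF pM lL _ m0_le(2)] lh assms by fastforce
  have mu: "muP j < muP l"
    using mu_dec_ch[OF pM lL _ m0_le(2)] lh assms j(1) by (simp add: muP_def)
  have T: "TP Asc j < TP Asc l" using mu assms j by (simp add: TP_def)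
  have ji0: "j \<le> i0" using j m0_le aT_le_i0 by simp
  have c: "d (up par 0 p l) (up par 0 p j) \<le> PF l - PF j"
    unfolding PF_split[OF j(2) ji0] dp_def using j(2) ji0 i0_le_L by (intro chain_le pM) auto
  have iv: "Inv (Asc, ch par p j)" using j m0_le by (auto simp: Inv_def)
  have ne: "ch par p j \<noteq> ch par p l" using j(4) by (simp add: ch_def)
  show ?thesis unfolding ff j(1) good_def
    using TP_P PhiP T c iv ne j(5) by (simp add: cost_def EE_def)
qed

lemma good_asc_par: assumes "hL \<le> l" "l < aT" shows "good (Asc, ch par p l) (FF (Asc, ch par p l))"
proof -
  have lt: "int l < iT" using assms by (simp add: aT_def)
  have ff: "FF (Asc, ch par p l) = (Asc, ch par p (Suc l))"
    using lt assms by (simp add: FF_P Let_def ascend_step_def parent_P)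
  have li: "l < i0" using assms aT_le_i0 by simp
  have T: "TP Asc (Suc l) < TP Asc l" using assms m0_le li by (simp add: TP_def)
  have c: "d (up par 0 p l) (up par 0 p (Suc l)) \<le> PF l - PF (Suc l)"
    using PF_split[of l "Suc l"] li by (simp add: dp_def)
  have iv: "Inv (Asc, ch par p (Suc l))" using assms by (auto simp: Inv_def)
  have ne: "ch par p (Suc l) \<noteq> ch par p l" by (simp add: ch_def)
  have ed: "spanner_edge d par \<gamma> S (ch par p l) (ch par p (Suc l))"
    by (simp add: spanner_edge_def tree_edge_def parent_P)
  show ?thesis unfolding ff good_def
    using TP_P PhiP T c iv ne ed by (simp add: cost_def EE_def)
qed

lemma good_srch: assumes "ph \<noteq> Desc" "ph = Asc \<Longrightarrow> aT \<le> l" "l \<le> i0"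
  shows "good (ph, ch par p l) (FF (ph, ch par p l))"
proof -
  have ff: "FF (ph, ch par p l) = (if is_anc_of par q (ch par p l) then (Desc, descend_step par sr hL q (ch par p l))
     else (Srch, search_step d par \<gamma> q (ch par p l)))" by (rule FF_srch[OF assms(1,2)])
  have lL: "l \<le> L" using assms(3) i0_le_L by simp
  have TPl: "TP ph l = i0 - l + 1 + TQ i0"
    using assms m0_le by (cases ph) (auto simp: TP_def)
  have mp: "up par 0 p l \<in> M" "up par 0 q l \<in> M" using lL pM qM by (auto intro: up_M)
  show ?thesis
  proof (cases "l < i0")
    case True
    have g: "\<gamma> * 2^l < d (up par 0 p l) (up par 0 q l)" by (rule below_i0[OF True])
    then have "up par 0 p l \<noteq> up par 0 q l" using d0 mp gam
      by (metis less_irrefl mult_pos_pos zero_less_power zero_less_numeral order.strict_trans less_trans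
          zero_less_one numeral_One one_less_numeral_iff semiring_norm(68))
    then have na: "\<not> is_anc_of par q (ch par p l)" by (simp add: is_anc_of_def)
    have nc: "\<not> cross_edge d \<gamma> (ch par p l) (l, up par 0 q l)"
      using g by (simp add: cross_edge_def)
    have ff2: "FF (ph, ch par p l) = (Srch, ch par p (Suc l))"
      using ff na nc by (simp add: search_step_def parent_P)
    have T: "TP Srch (Suc l) < TP ph l" using TPl True by (simp add: TP_def)
    have c: "d (up par 0 p l) (up par 0 p (Suc l)) \<le> PF l - PF (Suc l)"
      using PF_split[of l "Suc l"] True by (simp add: dp_def)
    have iv: "Inv (Srch, ch par p (Suc l))" using True by (auto simp: Inv_def)
    have ne: "ch par p (Suc l) \<noteq> ch par p l" by (simp add: ch_def)
    have ed: "spanner_edge d par \<gamma> S (ch par p l) (ch par p (Suc l))"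
      by (simp add: spanner_edge_def tree_edge_def parent_P)
    show ?thesis unfolding ff2 good_def
      using TP_P[OF assms(1)] PhiP[OF assms(1)] TP_P[of Srch] PhiP[of Srch] T c iv ne ed
      by (simp add: cost_def EE_def)
  next
    case False
    then have li: "l = i0" using assms(3) by simp
    show ?thesis
    proof (cases "up par 0 p i0 = up par 0 q i0")
      case True
      have PQ: "ch par p i0 = ch par q i0" using True by (simp add: ch_def)
      have i0p: "0 < i0" using True pq by (cases i0) auto
      obtain l' where l': "l' < i0" "descend_step par sr hL q (ch par q i0) = ch par q l'" "TQ l' < TQ i0"
        "d (up par 0 q i0) (up par 0 q l') \<le> QF i0 - QF l'"
        "spanner_edge d par \<gamma> S (ch par q i0) (ch par q l')"
        using desc_step[OF i0p order.refl] by blast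
      have ff2: "FF (ph, ch par p l) = (Desc, ch par q l')"
        using ff li PQ l'(2) by (simp add: is_anc_of_def)
      have np: "\<not> isP (Desc, ch par q l')" by (simp add: isP_def)
      have t2: "Tm (Desc, ch par q l') = TQ l'" "Phi (Desc, ch par q l') = QF l'"
        using np by (simp_all add: Tm_def Phi_def)
      have PFi: "PF i0 = QF i0" using True d0 mp li by (simp add: PF_def)
      have iv: "Inv (Desc, ch par q l')" using l'(1) by (auto simp: Inv_def)
      have ne: "ch par q l' \<noteq> ch par p l" using l'(1) li by (simp add: ch_def)
      have ed: "spanner_edge d par \<gamma> S (ch par p l) (ch par q l')" using l'(5) PQ li by simp
      have cc: "d (up par 0 p l) (up par 0 q l') \<le> QF i0 - QF l'" using l'(4) True li by simp
      show ?thesis unfolding ff2 good_def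
        using TP_P[OF assms(1)] PhiP[OF assms(1)] t2 TPl PFi iv ne l'(3) li ed cc
        by (simp add: cost_def EE_def)
    next
      case False
      have na: "\<not> is_anc_of par q (ch par p l)" using False li by (simp add: is_anc_of_def)
      have ce: "cross_edge d \<gamma> (ch par p l) (l, up par 0 q l)"
        using False li i0_prop by (simp add: cross_edge_def ch_def)
      have ff2: "FF (ph, ch par p l) = (Srch, ch par q i0)"
        using ff na ce li by (simp add: search_step_def ch_def)
      have np: "\<not> isP (Srch, ch par q i0)" using False by (simp add: isP_def ch_def)
      have t2: "Tm (Srch, ch par q i0) = TQ i0" "Phi (Srch, ch par q i0) = QF i0"
        using np by (simp_all add: Tm_def Phi_def)
      have PFi: "PF i0 = d (up par 0 p i0) (up par 0 q i0) + QF i0" by (simp add: PF_def)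
      have iv: "Inv (Srch, ch par q i0)" using False by (auto simp: Inv_def)
      have ne: "ch par q i0 \<noteq> ch par p l" using False li by (simp add: ch_def)
      have ed: "spanner_edge d par \<gamma> S (ch par p l) (ch par q i0)"
        using ce li by (simp add: spanner_edge_def ch_def)
      show ?thesis unfolding ff2 good_def
        using TP_P[OF assms(1)] PhiP[OF assms(1)] t2 TPl PFi iv ne ed li
        by (simp add: cost_def EE_def)
    qed
  qed
qed

lemma step_good: assumes "Inv s" "\<not> Fin s" shows "good s (FF s)"
proof -
  consider (A) l where "s = (Asc, ch par p l)" "l \<le> aT"
    | (B) l where "s = (Srch, ch par p l)" "l \<le> i0"
    | (C) "s = (Srch, ch par q i0)" "up par 0 p i0 \<noteq> up par 0 q i0"
    | (D) l where "s = (Desc, ch par q l)" "l \<le> i0"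
    using assms(1) unfolding Inv_def by blast
  then show ?thesis
  proof cases
    case (A l)
    show ?thesis
    proof (cases "l < aT")
      case True
      show ?thesis
      proof (cases "l < m0")
        case True then show ?thesis using A good_asc_light by simp
      next
        case False
        then have "hL \<le> l" using \<open>l < aT\<close> by (simp add: m0_def)
        then show ?thesis using A good_asc_par \<open>l < aT\<close> by simp
      qed
    next
      case False
      then show ?thesis using A aT_le_i0 by (intro good_srch[of Asc l, folded A(1)]) auto
    qed
  next
    case (B l)
    then show ?thesis by (intro good_srch[of Srch l, folded B(1)]) auto
  next
    case C
    have i0p: "0 < i0" using assms(2) C(1) by (cases i0) (auto simp: Fin_def ch_def)
    have np: "\<not> isP (Srch, ch par q i0)" using C(2) by (simp add: isP_def ch_def)
    show ?thesis unfolding C(1) by (rule good_desc[OF i0p order.refl np FF_srchQ[OF i0p]])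
  next
    case (D l)
    have lp: "0 < l" using assms(2) D(1) by (cases l) (auto simp: Fin_def ch_def)
    have np: "\<not> isP (Desc, ch par q l)" by (simp add: isP_def)
    show ?thesis unfolding D(1) by (rule good_desc[OF lp D(2) np FF_desc[OF lp]])
  qed
qed

lemma dp_nn: assumes "j < i0" shows "0 \<le> dp j"
proof -
  have "up par 0 p j \<in> M" "up par 0 p (Suc j) \<in> M" using assms i0_le_L by (intro up_M pM; simp)+
  then show ?thesis unfolding dp_def by (rule dnn)
qed

lemma dq_nn: assumes "j < i0" shows "0 \<le> dq j"
proof -
  have "up par 0 q j \<in> M" "up par 0 q (Suc j) \<in> M" using assms i0_le_L by (intro up_M qM; simp)+
  then show ?thesis unfolding dq_def by (rule dnn)
qed

lemma QF_nn: "l \<le> i0 \<Longrightarrow> 0 \<le> QF l"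
  unfolding QF_def using dq_nn by (intro sum_nonneg) auto

lemma PF_nn: "0 \<le> PF l"
proof -
  have "0 \<le> (\<Sum>j\<in>{l..<i0}. dp j)" using dp_nn by (intro sum_nonneg) auto
  moreover have "0 \<le> d (up par 0 p i0) (up par 0 q i0)" using i0_le_L pM qM by (intro dnn up_M) auto
  ultimately show ?thesis using QF_nn[of i0] by (simp add: PF_def)
qed

lemma Phi_fin: "Fin s \<Longrightarrow> 0 \<le> Phi s"
  using PF_nn by (auto simp: Fin_def Phi_def QF_def)

lemma Phi0: "Phi (Asc, ch par p 0) \<le> (1 + \<epsilon>) * d p q"
proof -
  have "PF 0 \<le> (1 + \<epsilon>) * d p q"
    using gok pM qM unfolding gamma_ok_def Let_def PF_def QF_def dp_def dq_def
    by (simp add: i0_def atLeast0LessThan)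
  then show ?thesis using PhiP[of Asc 0] by simp
qed

lemma Dm: "real (i0 - m0) \<le> real K0 + 1 + log 2 (real (card M))"
proof -
  have mi: "m0 \<le> i0" using m0_le aT_le_i0 by simp
  show ?thesis
  proof (cases "aT \<le> hL")
    case True
    then have "m0 = aT" by (simp add: m0_def)
    then show ?thesis using i0_up logn1 mi by (simp add: of_nat_diff)
  next
    case False
    then have "m0 = hL" by (simp add: m0_def)
    then show ?thesis using i0_up aT_le_h mi by (simp add: of_nat_diff)
  qed
qed

lemma TQb: "real (TQ i0) \<le> real (i0 - m0) + c * log 2 (real (card M))"
proof (cases "i0 \<le> hL")
  case True
  have "real (muQ i0) \<le> c * log 2 (real (card M))"
    unfolding muQ_def using True m0_le by (intro mu_bound qM) auto
  then show ?thesis using True by (simp add: TQ_def)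
next
  case False
  have "real (muQ hL) \<le> c * log 2 (real (card M))"
    unfolding muQ_def using False m0_le by (intro mu_bound qM) auto
  moreover have "i0 - hL \<le> i0 - m0" using m0_le by simp
  ultimately show ?thesis using False by (simp add: TQ_def)
qed

lemma TPb: "real (TP Asc 0) \<le> c * log 2 (real (card M)) + real (i0 - m0) + 1 + real (TQ i0)"
proof (cases "0 < m0")
  case True
  have "real (muP 0) \<le> c * log 2 (real (card M))"
    unfolding muP_def using True m0_le by (intro mu_bound pM) auto
  then show ?thesis using True by (simp add: TP_def)
next
  case False
  have "0 \<le> c * log 2 (real (card M))" using cpos logn1 by simp
  then show ?thesis using False by (simp add: TP_def)
qed

lemma Tm0: "real (Tm (Asc, ch par p 0)) \<le> (2 * c + 2 * real K0 + 5) * log 2 (real (card M))"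
proof -
  have "(2 * real K0 + 3) * 1 \<le> (2 * real K0 + 3) * log 2 (real (card M))"
    using logn1 by (intro mult_left_mono) auto
  then show ?thesis using TP_P[of Asc 0] TPb TQb Dm logn1
    by (simp add: algebra_simps)
qed

lemma main: "\<exists>m. snd ((FF^^m) (Asc, (0, p))) = (0, q) \<and>
   (\<forall>j<m. snd ((FF^^Suc j) (Asc, (0, p))) \<noteq> snd ((FF^^j) (Asc, (0, p))) \<longrightarrow>
        spanner_edge d par \<gamma> S (snd ((FF^^j) (Asc, (0, p)))) (snd ((FF^^Suc j) (Asc, (0, p))))) \<and>
   real (card {j. j < m \<and> snd ((FF^^Suc j) (Asc, (0, p))) \<noteq> snd ((FF^^j) (Asc, (0, p)))})
      \<le> (2 * c + 2 * real K0 + 5) * log 2 (real (card M)) \<and>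
   (\<Sum>j<m. d (snd (snd ((FF^^j) (Asc, (0, p))))) (snd (snd ((FF^^Suc j) (Asc, (0, p))))))
      \<le> (1 + \<epsilon>) * d p q"
proof -
  let ?s0 = "(Asc, ch par p 0)"
  have s0: "?s0 = (Asc, (0, p))" by (simp add: ch_def)
  have iv: "Inv ?s0" by (auto simp: Inv_def)
  obtain m where m: "m \<le> Tm ?s0" "Fin ((FF^^m) ?s0)" "\<forall>j<m. EE ((FF^^j) ?s0) ((FF^^Suc j) ?s0)"
    "(\<Sum>j<m. cost ((FF^^j) ?s0) ((FF^^Suc j) ?s0)) \<le> Phi ?s0 - Phi ((FF^^m) ?s0)"
    using run_lemma[of Inv Fin FF Tm cost Phi EE, OF _ iv] step_good unfolding good_def by blast
  have c1: "real (card {j. j < m \<and> snd ((FF^^Suc j) ?s0) \<noteq> snd ((FF^^j) ?s0)}) \<le> real m"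
  proof -
    have "card {j. j < m \<and> snd ((FF^^Suc j) ?s0) \<noteq> snd ((FF^^j) ?s0)} \<le> card {..<m}"
      by (intro card_mono) auto
    then show ?thesis by simp
  qed
  have c2: "real m \<le> (2 * c + 2 * real K0 + 5) * log 2 (real (card M))"
    using m(1) Tm0 by linarith
  have c3: "(\<Sum>j<m. cost ((FF^^j) ?s0) ((FF^^Suc j) ?s0)) \<le> (1 + \<epsilon>) * d p q"
    using m(4) Phi_fin[OF m(2)] Phi0 by linarith
  show ?thesis unfolding s0[symmetric]
    using m(2,3) c1 c2 c3 by (auto simp: Fin_def EE_def cost_def)
qed

end

lemma aux5:
  fixes \<epsilon> \<gamma> \<delta> c :: real and K0 :: nat and M :: "'a set"
  assumes "\<epsilon> > 0" "\<gamma> > 4" "\<delta> > 0" "c > 0" "2 * ((1+\<delta>)*(\<gamma>+4)) / (\<gamma> - 4) < 2 ^ K0"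
    and "finite M" "metric_on M d" "is_net_seq M d N L" "is_parent_fun N L d par"
    "spanner_router sr S N L par (light_level M d) c (card M)" "approx_labelling M d \<delta> dt"
    "gamma_ok M d par \<gamma> \<epsilon>" "p \<in> M" "q \<in> M"
  shows "\<exists>m. snd (route_state M d par sr dt \<delta> \<gamma> p q m) = (0, q) \<and>
            (\<forall>j<m. snd (route_state M d par sr dt \<delta> \<gamma> p q (Suc j)) \<noteq> snd (route_state M d par sr dt \<delta> \<gamma> p q j)
                 \<longrightarrow> spanner_edge d par \<gamma> S (snd (route_state M d par sr dt \<delta> \<gamma> p q j))
                                             (snd (route_state M d par sr dt \<delta> \<gamma> p q (Suc j)))) \<and>
            real (card {j. j < m \<and> snd (route_state M d par sr dt \<delta> \<gamma> p q (Suc j)) \<noteq> snd (route_state M d par sr dt \<delta> \<gamma> p q j)})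
              \<le> (2 * c + 2 * real K0 + 5) * log 2 (real (card M)) \<and>
            (\<Sum>j<m. d (snd (snd (route_state M d par sr dt \<delta> \<gamma> p q j))) (snd (snd (route_state M d par sr dt \<delta> \<gamma> p q (Suc j)))))
              \<le> (1 + \<epsilon>) * d p q"
proof (cases "p = q")
  case True
  have "card M \<ge> 1" using assms(6,13) by (metis One_nat_def Suc_leI card_gt_0_iff empty_iff)
  then have "0 \<le> log 2 (real (card M))" by simp
  moreover have "0 \<le> 2 * c + 2 * real K0 + 5" using assms(4) by simp
  ultimately have "0 \<le> (2 * c + 2 * real K0 + 5) * log 2 (real (card M))" by simp
  moreover have "d q q = 0" using assms(7,14) unfolding metric_on_def by blast
  ultimately show ?thesis using True by (intro exI[of _ 0]) (simp add: route_state_def)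
next
  case False
  interpret rt M d N L par sr S dt p q \<epsilon> \<gamma> \<delta> c K0
    using assms False by unfold_locales auto
  have rs: "route_state M d par sr dt \<delta> \<gamma> p q = (\<lambda>m. (FF^^m) (Asc, (0, p)))"
    by (simp add: fun_eq_iff route_state_def FF_def hL_def iT_def)
  show ?thesis unfolding rs by (rule main)
qed

theorem theorem5:
  fixes \<epsilon> \<gamma> \<delta> c :: real and dd :: nat
  assumes "\<epsilon> > 0" and "\<gamma> > 4" and "\<delta> > 0" and "c > 0"
  shows "\<exists>C::real. \<forall>(M::'a set) d N L par sr S dt p q.
     finite M \<and> metric_on M d \<and> min_dist_one M d \<and> doubling M d dd \<and>
     is_net_seq M d N L \<and> is_parent_fun N L d par \<and>
     shortcut_set N L par (light_level M d) S \<and>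
     spanner_router sr S N L par (light_level M d) c (card M) \<and>
     approx_labelling M d \<delta> dt \<and> gamma_ok M d par \<gamma> \<epsilon> \<and> p \<in> M \<and> q \<in> M
     \<longrightarrow> (\<exists>m. snd (route_state M d par sr dt \<delta> \<gamma> p q m) = (0, q) \<and>
            (\<forall>j<m. snd (route_state M d par sr dt \<delta> \<gamma> p q (Suc j)) \<noteq> snd (route_state M d par sr dt \<delta> \<gamma> p q j)
                 \<longrightarrow> spanner_edge d par \<gamma> S (snd (route_state M d par sr dt \<delta> \<gamma> p q j))
                                             (snd (route_state M d par sr dt \<delta> \<gamma> p q (Suc j)))) \<and>
            real (card {j. j < m \<and> snd (route_state M d par sr dt \<delta> \<gamma> p q (Suc j)) \<noteq> snd (route_state M d par sr dt \<delta> \<gamma> p q j)})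
              \<le> C * log 2 (real (card M)) \<and>
            (\<Sum>j<m. d (snd (snd (route_state M d par sr dt \<delta> \<gamma> p q j))) (snd (snd (route_state M d par sr dt \<delta> \<gamma> p q (Suc j)))))
              \<le> (1 + \<epsilon>) * d p q)"
proof -
  obtain K0 :: nat where K0: "2 * ((1+\<delta>)*(\<gamma>+4)) / (\<gamma> - 4) < 2 ^ K0"
    using real_arch_pow[of 2] by auto
  show ?thesis
    by (rule exI[of _ "2 * c + 2 * real K0 + 5"], intro allI impI, elim conjE)
       (rule aux5[OF assms K0]; assumption)
qed

end
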